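(* Let $(Y,X,Z)$ be random variables with $Y$ real-valued with $\mathbb{E}(Y^2)<\infty$, $X\in\{1,\dots,K\}$ a multinomial treatment with marginal probabilities $p_k=\mathbb{P}(X=k)>0$, and $Z$ a confounder. Let $(Y^{(a)},X^{(a)},Z^{(a)})$ and $(Y^{(b)},X^{(b)},Z^{(b)})$ be two independent copies of $(Y,X,Z)$, let $f_0(x,z)=\mathbb{E}(Y\mid X=x,Z=z)$, and define $$e_{\mathrm{orig}}(f_0)=\mathbb{E}\big[(Y^{(a)}-f_0(X^{(a)},Z^{(a)}))^2\big],\qquad e_{\mathrm{switch}}(f_0)=\mathbb{E}\big[(Y^{(a)}-f_0(X^{(b)},Z^{(a)}))^2\big],$$ $$GVIM_X(f_0)=e_{\mathrm{switch}}(f_0)-e_{\mathrm{orig}}(f_0).$$ Assume potential outcomes $Y_1,\dots,Y_K$ exist with consistency ($Y=Y_X$), positivity ($0<\mathbb{P}(X=k\mid Z=z)<1$ for all $k$ and $z$) and conditional ignorability ($(Y_1,\dots,Y_K)\perp X\mid Z$). Then $$GVIM_X(f_0)=\sum_{k\neq j}p_kp_j\,\mathbb{E}_{Z\mid X=k}\Big[\big(\mathbb{E}(Y_k\mid Z)-\mathbb{E}(Y_j\mid Z)\big)^2\Big],$$ where the sum runs over all ordered pairs $(k,j)\in\{1,\dots,K\}^2$ with $k\neq j$, and $\mathbb{E}_{Z\mid X=k}$ denotes expectation over $Z$ drawn from its conditional distribution given $X=k$.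
   Context: The quantity $\mathbb{E}(Y_k\mid Z)-\mathbb{E}(Y_j\mid Z)$ is the conditional average treatment effect (CATE) of treatment level $k$ versus $j$ given $Z$. The "switched" error is obtained by replacing the treatment of one observation with the treatment of an independent copy, keeping the outcome and confounder of the first observation. *)

theory Defs
  imports "HOL-Probability.Probability"
begin

definition sigma_rv :: "'a measure \<Rightarrow> ('a \<Rightarrow> 'b) \<Rightarrow> 'b measure \<Rightarrow> 'a measure" where
  "sigma_rv M V N = vimage_algebra (space M) V N"

definition cond_prob_given :: "'a measure \<Rightarrow> 'a measure \<Rightarrow> 'a set \<Rightarrow> 'a \<Rightarrow> real" where
  "cond_prob_given M F S = real_cond_exp M F (indicator S)"

definition cond_indep_rv ::
  "'a measure \<Rightarrow> 'b measure \<Rightarrow> ('a \<Rightarrow> 'b) \<Rightarrow> 'c measure \<Rightarrow> ('a \<Rightarrow> 'c)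
     \<Rightarrow> 'd measure \<Rightarrow> ('a \<Rightarrow> 'd) \<Rightarrow> bool" where
  "cond_indep_rv M MA A MB B MC C \<longleftrightarrow>
     (\<forall>SA\<in>sets MA. \<forall>SB\<in>sets MB. AE \<omega> in M.
        cond_prob_given M (sigma_rv M C MC) (A -` SA \<inter> B -` SB \<inter> space M) \<omega> =
        cond_prob_given M (sigma_rv M C MC) (A -` SA \<inter> space M) \<omega> *
        cond_prob_given M (sigma_rv M C MC) (B -` SB \<inter> space M) \<omega>)"

end

theory Submission
  imports Defs
begin

locale gvim = prob_space M
  for M :: "'a measure" +
  fixes MZ :: "'z measure" and K :: nat
    and Y :: "'a \<Rightarrow> real" and X :: "'a \<Rightarrow> nat" and Z :: "'a \<Rightarrow> 'z"
    and Ypot :: "nat \<Rightarrow> 'a \<Rightarrow> real"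
    and f0 :: "nat \<Rightarrow> 'z \<Rightarrow> real" and m :: "nat \<Rightarrow> 'z \<Rightarrow> real"
  assumes Y_meas[measurable]: "Y \<in> borel_measurable M"
    and Y_sq: "integrable M (\<lambda>\<omega>. (Y \<omega>)\<^sup>2)"
    and X_meas[measurable]: "X \<in> measurable M (count_space UNIV)"
    and X_range: "\<forall>\<omega>\<in>space M. X \<omega> \<in> {1..K}"
    and p_pos: "\<forall>k\<in>{1..K}. measure M {\<omega>\<in>space M. X \<omega> = k} > 0"
    and Z_meas[measurable]: "Z \<in> measurable M MZ"
    and Ypot_meas: "\<forall>k\<in>{1..K}. Ypot k \<in> borel_measurable M"
    and consistency: "AE \<omega> in M. Y \<omega> = Ypot (X \<omega>) \<omega>"
    and positivity: "\<forall>k\<in>{1..K}. AE \<omega> in M.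
           0 < cond_prob_given M (sigma_rv M Z MZ) {\<omega>'\<in>space M. X \<omega>' = k} \<omega> \<and>
           cond_prob_given M (sigma_rv M Z MZ) {\<omega>'\<in>space M. X \<omega>' = k} \<omega> < 1"
    and ignorability: "cond_indep_rv M (PiM {1..K} (\<lambda>_. borel)) (\<lambda>\<omega>. restrict (\<lambda>k. Ypot k \<omega>) {1..K})
                         (count_space UNIV) X MZ Z"
    and f0_meas: "(\<lambda>(x, z). f0 x z) \<in> borel_measurable (count_space UNIV \<Otimes>\<^sub>M MZ)"
    and f0_cond: "AE \<omega> in M. f0 (X \<omega>) (Z \<omega>) =
           real_cond_exp M (sigma_rv M (\<lambda>\<omega>. (X \<omega>, Z \<omega>)) (count_space UNIV \<Otimes>\<^sub>M MZ)) Y \<omega>"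
    and m_meas: "\<forall>k\<in>{1..K}. m k \<in> borel_measurable MZ"
    and m_cond: "\<forall>k\<in>{1..K}. AE \<omega> in M. m k (Z \<omega>) = real_cond_exp M (sigma_rv M Z MZ) (Ypot k) \<omega>"
begin

abbreviation "F \<equiv> sigma_rv M Z MZ"
abbreviation "G \<equiv> sigma_rv M (\<lambda>\<omega>. (X \<omega>, Z \<omega>)) (count_space UNIV \<Otimes>\<^sub>M MZ)"
abbreviation "AX k \<equiv> {\<omega>\<in>space M. X \<omega> = k}"
abbreviation "cp S \<equiv> real_cond_exp M F (indicator S)"

lemma sfs_rv:
  assumes "V \<in> measurable M N"
  shows "sigma_finite_subalgebra M (sigma_rv M V N)"
proof -
  have "subalgebra M (sigma_rv M V N)"
    unfolding subalgebra_def sigma_rv_def using sets_image_in_sets[OF refl assms] by simp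
  then have "finite_measure_subalgebra M (sigma_rv M V N)"
    by (simp add: finite_measure_axioms finite_measure_subalgebra.intro finite_measure_subalgebra_axioms.intro)
  then show ?thesis by (rule finite_measure_subalgebra_is_sigma_finite)
qed

lemma XZ_meas[measurable]: "(\<lambda>\<omega>. (X \<omega>, Z \<omega>)) \<in> measurable M (count_space UNIV \<Otimes>\<^sub>M MZ)"
  by measurable

lemma F_sfs: "sigma_finite_subalgebra M F" by (rule sfs_rv) simp
lemma G_sfs: "sigma_finite_subalgebra M G" by (rule sfs_rv) simp

lemma Z_F[measurable]: "Z \<in> measurable F MZ"
  unfolding sigma_rv_def by (rule measurable_vimage_algebra1) (use measurable_space[OF Z_meas] in auto)

lemma XZ_G: "(\<lambda>\<omega>. (X \<omega>, Z \<omega>)) \<in> measurable G (count_space UNIV \<Otimes>\<^sub>M MZ)"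
  unfolding sigma_rv_def by (rule measurable_vimage_algebra1) (use measurable_space[OF XZ_meas] in auto)

lemma space_F[simp]: "space F = space M" by (simp add: sigma_rv_def)
lemma space_G[simp]: "space G = space M" by (simp add: sigma_rv_def)

lemma sets_F: "sets F = {Z -` C \<inter> space M | C. C \<in> sets MZ}"
  unfolding sigma_rv_def by (rule sets_vimage_algebra2) (use measurable_space[OF Z_meas] in auto)

lemma sets_F_M: "B \<in> sets F \<Longrightarrow> B \<in> sets M"
  using sigma_finite_subalgebra.subalg[OF F_sfs] by (auto simp: subalgebra_def)

lemma sets_G_M: "B \<in> sets G \<Longrightarrow> B \<in> sets M"
  using sigma_finite_subalgebra.subalg[OF G_sfs] by (auto simp: subalgebra_def)

lemma F_G: "B \<in> sets F \<Longrightarrow> B \<in> sets G"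
proof -
  assume "B \<in> sets F"
  then obtain C where C: "C \<in> sets MZ" "B = Z -` C \<inter> space M" using sets_F by auto
  have "(\<lambda>\<omega>. (X \<omega>, Z \<omega>)) -` (UNIV \<times> C) \<inter> space M \<in> sets G"
    unfolding sigma_rv_def by (rule in_vimage_algebra) (use C in auto)
  moreover have "(\<lambda>\<omega>. (X \<omega>, Z \<omega>)) -` (UNIV \<times> C) \<inter> space M = B" using C by auto
  ultimately show ?thesis by simp
qed

lemma AX_G: "AX k \<in> sets G"
proof -
  have "(\<lambda>\<omega>. (X \<omega>, Z \<omega>)) -` ({k} \<times> space MZ) \<inter> space M \<in> sets G"
    unfolding sigma_rv_def by (rule in_vimage_algebra) auto
  moreover have "(\<lambda>\<omega>. (X \<omega>, Z \<omega>)) -` ({k} \<times> space MZ) \<inter> space M = AX k"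
    using measurable_space[OF Z_meas] by auto
  ultimately show ?thesis by simp
qed

lemma AX_M[measurable]: "AX k \<in> sets M" by measurable

lemma f0_Z_F[measurable]: "(\<lambda>\<omega>. f0 j (Z \<omega>)) \<in> borel_measurable F"
proof -
  have "(\<lambda>z. (\<lambda>(x, z). f0 x z) (j, z)) \<in> borel_measurable MZ"
    using f0_meas by measurable
  then show ?thesis by simp
qed

lemma f0_Z_M[measurable]: "(\<lambda>\<omega>. f0 j (Z \<omega>)) \<in> borel_measurable M"
  using measurable_from_subalg[OF sigma_finite_subalgebra.subalg[OF F_sfs] f0_Z_F] .

lemma Ypot_M[measurable]: "j \<in> {1..K} \<Longrightarrow> Ypot j \<in> borel_measurable M"
  using Ypot_meas by auto

lemma cp_F[measurable]: "cp S \<in> borel_measurable F" by simp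
lemma cp_M[measurable]: "cp S \<in> borel_measurable M" by simp

lemma cp_int: "S \<in> sets M \<Longrightarrow> integrable M (cp S)"
  by (rule sigma_finite_subalgebra.real_cond_exp_int(1)[OF F_sfs]) (simp add: less_top[symmetric])

lemma pos_AX: "j \<in> {1..K} \<Longrightarrow> AE \<omega> in M. 0 < cp (AX j) \<omega> \<and> cp (AX j) \<omega> < 1"
  using positivity by (auto simp: cond_prob_given_def)

lemma ign_set:
  assumes j: "j \<in> {1..K}" and S[measurable]: "S \<in> sets borel"
  shows "AE \<omega> in M. cp ({x\<in>space M. Ypot j x \<in> S} \<inter> AX j) \<omega> =
                     cp {x\<in>space M. Ypot j x \<in> S} \<omega> * cp (AX j) \<omega>"
proof -
  let ?V = "\<lambda>\<omega>. restrict (\<lambda>k. Ypot k \<omega>) {1..K}"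
  let ?SA = "(\<lambda>y. y j) -` S \<inter> space (PiM {1..K} (\<lambda>_. borel :: real measure))"
  have SA: "?SA \<in> sets (PiM {1..K} (\<lambda>_. borel :: real measure))"
    by (rule measurable_sets[OF measurable_component_singleton[OF j] S])
  have SB: "{j} \<in> sets (count_space UNIV)" by simp
  have e1: "?V -` ?SA \<inter> X -` {j} \<inter> space M = {x\<in>space M. Ypot j x \<in> S} \<inter> AX j"
    using j by (auto simp: space_PiM)
  have e2: "?V -` ?SA \<inter> space M = {x\<in>space M. Ypot j x \<in> S}"
    using j by (auto simp: space_PiM)
  have e3: "X -` {j} \<inter> space M = AX j" by auto
  have "AE \<omega> in M. cp (?V -` ?SA \<inter> X -` {j} \<inter> space M) \<omega> =
        cp (?V -` ?SA \<inter> space M) \<omega> * cp (X -` {j} \<inter> space M) \<omega>"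
    using ignorability SA SB unfolding cond_indep_rv_def cond_prob_given_def by blast
  then show ?thesis unfolding e1 e2 e3 .
qed


lemma indF[measurable]: "B \<in> sets F \<Longrightarrow> indicator B \<in> borel_measurable F" by (rule borel_measurable_indicator)

lemma KL_real:
  assumes j: "j \<in> {1..K}" and B: "B \<in> sets F" and S[measurable]: "S \<in> sets borel"
  shows "(\<integral>\<omega>. indicator B \<omega> * indicator ({x\<in>space M. Ypot j x \<in> S} \<inter> AX j) \<omega> \<partial>M)
       = (\<integral>\<omega>. (indicator B \<omega> * cp (AX j) \<omega>) * indicator {x\<in>space M. Ypot j x \<in> S} \<omega> \<partial>M)"
proof -
  interpret Fs: sigma_finite_subalgebra M F by (rule F_sfs)
  let ?E = "{x\<in>space M. Ypot j x \<in> S}"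
  have [measurable]: "Ypot j \<in> borel_measurable M" using j by simp
  have E[measurable]: "?E \<in> sets M" by measurable
  have BM[measurable]: "B \<in> sets M" using B by (rule sets_F_M)
  have BF[measurable]: "indicator B \<in> borel_measurable F" using B by (rule indF)
  have "(\<integral>\<omega>. indicator B \<omega> * indicator (?E \<inter> AX j) \<omega> \<partial>M)
      = (\<integral>\<omega>. indicator B \<omega> * cp (?E \<inter> AX j) \<omega> \<partial>M)"
    by (rule Fs.real_cond_exp_intg(2)[symmetric, OF _ BF])
       (auto intro!: integrable_const_bound[where B=1] simp: indicator_def)
  also have "\<dots> = (\<integral>\<omega>. indicator B \<omega> * (cp ?E \<omega> * cp (AX j) \<omega>) \<partial>M)"
    by (rule integral_cong_AE) (use ign_set[OF j S] in auto)
  also have "\<dots> = (\<integral>\<omega>. (indicator B \<omega> * cp (AX j) \<omega>) * cp ?E \<omega> \<partial>M)"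
    by (simp add: ac_simps)
  also have "\<dots> = (\<integral>\<omega>. (indicator B \<omega> * cp (AX j) \<omega>) * indicator ?E \<omega> \<partial>M)"
  proof (rule Fs.real_cond_exp_intg(2))
    show "integrable M (\<lambda>\<omega>. indicator B \<omega> * cp (AX j) \<omega> * indicator ?E \<omega>)"
      by (rule Bochner_Integration.integrable_bound[OF cp_int[OF AX_M[of j]]]) (auto simp: indicator_def)
  qed auto
  finally show ?thesis .
qed

lemma KL:
  assumes j: "j \<in> {1..K}" and B: "B \<in> sets F" and phi[measurable]: "\<phi> \<in> borel_measurable borel"
  shows "(\<integral>\<^sup>+\<omega>. indicator B \<omega> * indicator (AX j) \<omega> * \<phi> (Ypot j \<omega>) \<partial>M)
       = (\<integral>\<^sup>+\<omega>. indicator B \<omega> * ennreal (cp (AX j) \<omega>) * \<phi> (Ypot j \<omega>) \<partial>M)"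
proof -
  have [measurable]: "Ypot j \<in> borel_measurable M" using j by simp
  have BM[measurable]: "B \<in> sets M" using B by (rule sets_F_M)
  have nn: "AE \<omega> in M. 0 \<le> cp (AX j) \<omega>" using pos_AX[OF j] by eventually_elim auto
  define d1 where "d1 = (\<lambda>\<omega>. ennreal (indicator B \<omega> * indicator (AX j) \<omega>))"
  define d2 where "d2 = (\<lambda>\<omega>. ennreal (indicator B \<omega> * cp (AX j) \<omega>))"
  have [measurable]: "d1 \<in> borel_measurable M" "d2 \<in> borel_measurable M"
    unfolding d1_def d2_def by measurable
  have eq: "distr (density M d1) borel (Ypot j) = distr (density M d2) borel (Ypot j)"
  proof (rule measure_eqI)
    fix S :: "real set" assume S[measurable]: "S \<in> sets (distr (density M d1) borel (Ypot j))"
    then have S'[measurable]: "S \<in> sets borel" by simp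
    let ?E = "{x\<in>space M. Ypot j x \<in> S}"
    have Ev: "Ypot j -` S \<inter> space M = ?E" by auto
    have "emeasure (distr (density M d1) borel (Ypot j)) S = (\<integral>\<^sup>+x. d1 x * indicator ?E x \<partial>M)"
      by (subst emeasure_distr) (auto simp: emeasure_density Ev)
    also have "\<dots> = (\<integral>\<^sup>+x. ennreal (indicator B x * indicator (?E \<inter> AX j) x) \<partial>M)"
      by (rule nn_integral_cong) (auto simp: d1_def indicator_def)
    also have "\<dots> = ennreal (\<integral>x. indicator B x * indicator (?E \<inter> AX j) x \<partial>M)"
      by (rule nn_integral_eq_integral)
         (auto intro!: integrable_const_bound[where B=1] simp: indicator_def)
    also have "\<dots> = ennreal (\<integral>x. (indicator B x * cp (AX j) x) * indicator ?E x \<partial>M)"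
      using KL_real[OF j B S'] by simp
    also have "\<dots> = (\<integral>\<^sup>+x. ennreal ((indicator B x * cp (AX j) x) * indicator ?E x) \<partial>M)"
      by (rule nn_integral_eq_integral[symmetric])
         (use nn in \<open>auto intro!: Bochner_Integration.integrable_bound[OF cp_int[OF AX_M[of j]]] simp: indicator_def\<close>)
    also have "\<dots> = (\<integral>\<^sup>+x. d2 x * indicator ?E x \<partial>M)"
      by (rule nn_integral_cong_AE) (use nn in \<open>auto simp: d2_def indicator_def\<close>)
    also have "\<dots> = emeasure (distr (density M d2) borel (Ypot j)) S"
      by (subst emeasure_distr) (auto simp: emeasure_density Ev)
    finally show "emeasure (distr (density M d1) borel (Ypot j)) S = emeasure (distr (density M d2) borel (Ypot j)) S" .
  qed simp
  have "(\<integral>\<^sup>+\<omega>. indicator B \<omega> * indicator (AX j) \<omega> * \<phi> (Ypot j \<omega>) \<partial>M) = (\<integral>\<^sup>+\<omega>. d1 \<omega> * \<phi> (Ypot j \<omega>) \<partial>M)"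
    by (rule nn_integral_cong) (auto simp: d1_def indicator_def)
  also have "\<dots> = (\<integral>\<^sup>+y. \<phi> y \<partial>distr (density M d1) borel (Ypot j))"
    by (subst nn_integral_distr) (auto simp: nn_integral_density)
  also have "\<dots> = (\<integral>\<^sup>+y. \<phi> y \<partial>distr (density M d2) borel (Ypot j))" by (simp add: eq)
  also have "\<dots> = (\<integral>\<^sup>+\<omega>. d2 \<omega> * \<phi> (Ypot j \<omega>) \<partial>M)"
    by (subst nn_integral_distr) (auto simp: nn_integral_density)
  also have "\<dots> = (\<integral>\<^sup>+\<omega>. indicator B \<omega> * ennreal (cp (AX j) \<omega>) * \<phi> (Ypot j \<omega>) \<partial>M)"
    by (rule nn_integral_cong_AE) (use nn in \<open>auto simp: d2_def indicator_def\<close>)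
  finally show ?thesis .
qed


lemma abs_le_sq: "\<bar>x::real\<bar> \<le> 1 + x\<^sup>2"
proof (cases "\<bar>x\<bar> \<le> 1")
  case True then show ?thesis by (smt (verit) zero_le_power2)
next
  case False then have "\<bar>x\<bar> * 1 \<le> \<bar>x\<bar> * \<bar>x\<bar>" by (intro mult_left_mono) auto
  then show ?thesis by (simp add: power2_eq_square)
qed

lemma Y_int: "integrable M Y"
proof (rule Bochner_Integration.integrable_bound[of _ "\<lambda>\<omega>. 1 + (Y \<omega>)\<^sup>2"])
  show "integrable M (\<lambda>\<omega>. 1 + (Y \<omega>)\<^sup>2)" using Y_sq by simp
  show "AE x in M. norm (Y x) \<le> norm (1 + (Y x)\<^sup>2)" using abs_le_sq by simp
qed simp

lemma cp_nn: assumes j: "j \<in> {1..K}" shows "AE \<omega> in M. 0 \<le> cp (AX j) \<omega> \<and> cp (AX j) \<omega> \<le> 1"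
  using pos_AX[OF j] by eventually_elim auto

lemma NN:
  assumes j: "j \<in> {1..K}" and g[measurable]: "g \<in> borel_measurable borel"
    and gnn: "\<And>y. 0 \<le> g y" and gle: "\<And>y. g y \<le> \<bar>y\<bar>"
  defines "N \<equiv> nn_cond_exp M F (\<lambda>\<omega>. ennreal (g (Ypot j \<omega>)))"
  shows "AE \<omega> in M. N \<omega> \<noteq> \<infinity>"
    and "\<And>B c. B \<in> sets F \<Longrightarrow> B \<subseteq> {\<omega>. enn2real (N \<omega>) \<le> c} \<Longrightarrow>
          (\<integral>\<omega>. indicator B \<omega> * cp (AX j) \<omega> * enn2real (N \<omega>) \<partial>M)
        = (\<integral>\<omega>. indicator B \<omega> * indicator (AX j) \<omega> * g (Y \<omega>) \<partial>M)"
proof -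
  interpret Fs: sigma_finite_subalgebra M F by (rule F_sfs)
  have [measurable]: "Ypot j \<in> borel_measurable M" using j by simp
  have NF[measurable]: "N \<in> borel_measurable F" "N \<in> borel_measurable M" unfolding N_def by simp_all
  have key: "(\<integral>\<^sup>+\<omega>. indicator B \<omega> * ennreal (cp (AX j) \<omega>) * N \<omega> \<partial>M)
           = (\<integral>\<^sup>+\<omega>. indicator B \<omega> * indicator (AX j) \<omega> * ennreal (g (Y \<omega>)) \<partial>M)"
    if B: "B \<in> sets F" for B
  proof -
    have [measurable]: "B \<in> sets M" using B by (rule sets_F_M)
    have BF: "(\<lambda>\<omega>. indicator B \<omega> * ennreal (cp (AX j) \<omega>)) \<in> borel_measurable F"
      using borel_measurable_indicator[OF B] by measurable
    have "(\<integral>\<^sup>+\<omega>. indicator B \<omega> * ennreal (cp (AX j) \<omega>) * N \<omega> \<partial>M)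
        = (\<integral>\<^sup>+\<omega>. indicator B \<omega> * ennreal (cp (AX j) \<omega>) * ennreal (g (Ypot j \<omega>)) \<partial>M)"
      unfolding N_def by (rule Fs.nn_cond_exp_intg[OF BF]) simp
    also have "\<dots> = (\<integral>\<^sup>+\<omega>. indicator B \<omega> * indicator (AX j) \<omega> * ennreal (g (Ypot j \<omega>)) \<partial>M)"
      by (rule KL[OF j B, symmetric]) simp
    also have "\<dots> = (\<integral>\<^sup>+\<omega>. indicator B \<omega> * indicator (AX j) \<omega> * ennreal (g (Y \<omega>)) \<partial>M)"
      by (rule nn_integral_cong_AE) (use consistency in \<open>auto simp: indicator_def elim!: eventually_mono\<close>)
    finally show ?thesis .
  qed
  have gY_int: "integrable M (\<lambda>\<omega>. g (Y \<omega>))"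
    by (rule Bochner_Integration.integrable_bound[OF Y_int]) (auto simp: gle abs_of_nonneg gnn)
  have "(\<integral>\<^sup>+\<omega>. ennreal (cp (AX j) \<omega>) * N \<omega> \<partial>M)
      = (\<integral>\<^sup>+\<omega>. indicator (space M) \<omega> * ennreal (cp (AX j) \<omega>) * N \<omega> \<partial>M)"
    by (rule nn_integral_cong) auto
  also have "\<dots> = (\<integral>\<^sup>+\<omega>. indicator (space M) \<omega> * indicator (AX j) \<omega> * ennreal (g (Y \<omega>)) \<partial>M)"
    by (rule key) (simp add: sets.top[of F, simplified])
  also have "\<dots> \<le> (\<integral>\<^sup>+\<omega>. ennreal (g (Y \<omega>)) \<partial>M)"
    by (rule nn_integral_mono) (auto simp: indicator_def)
  also have "\<dots> < \<infinity>"
    using gY_int by (simp add: nn_integral_eq_integral gnn)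
  finally have "AE \<omega> in M. ennreal (cp (AX j) \<omega>) * N \<omega> \<noteq> \<infinity>"
    by (intro nn_integral_PInf_AE) auto
  then show fin: "AE \<omega> in M. N \<omega> \<noteq> \<infinity>"
    using pos_AX[OF j] by eventually_elim (auto simp: ennreal_mult_eq_top_iff)
  fix B c assume B: "B \<in> sets F" and Bc: "B \<subseteq> {\<omega>. enn2real (N \<omega>) \<le> c}"
  have [measurable]: "B \<in> sets M" using B by (rule sets_F_M)
  have i1: "integrable M (\<lambda>\<omega>. indicator B \<omega> * cp (AX j) \<omega> * enn2real (N \<omega>))"
  proof (rule Bochner_Integration.integrable_bound[of _ "\<lambda>\<omega>. c * cp (AX j) \<omega>"])
    show "integrable M (\<lambda>\<omega>. c * cp (AX j) \<omega>)" using cp_int[OF AX_M[of j]] by simp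
    show "AE \<omega> in M. norm (indicator B \<omega> * cp (AX j) \<omega> * enn2real (N \<omega>)) \<le> norm (c * cp (AX j) \<omega>)"
      using cp_nn[OF j] proof eventually_elim
      case (elim \<omega>)
      have "enn2real (N \<omega>) \<le> c" if "\<omega> \<in> B" using Bc that by auto
      moreover have "0 \<le> enn2real (N \<omega>)" by simp
      moreover have "enn2real (N \<omega>) \<le> c \<Longrightarrow> cp (AX j) \<omega> * enn2real (N \<omega>) \<le> cp (AX j) \<omega> * \<bar>c\<bar>"
        using elim by (intro mult_left_mono) auto
      ultimately show ?case using elim
        by (auto simp: indicator_def abs_mult mult.commute)
    qed
  qed simp
  have i2: "integrable M (\<lambda>\<omega>. indicator B \<omega> * indicator (AX j) \<omega> * g (Y \<omega>))"
    by (rule Bochner_Integration.integrable_bound[OF gY_int]) (auto simp: indicator_def gnn)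
  have "ennreal (\<integral>\<omega>. indicator B \<omega> * cp (AX j) \<omega> * enn2real (N \<omega>) \<partial>M)
      = (\<integral>\<^sup>+\<omega>. ennreal (indicator B \<omega> * cp (AX j) \<omega> * enn2real (N \<omega>)) \<partial>M)"
    by (rule nn_integral_eq_integral[OF i1, symmetric]) (use cp_nn[OF j] in \<open>auto elim!: eventually_mono\<close>)
  also have "\<dots> = (\<integral>\<^sup>+\<omega>. indicator B \<omega> * ennreal (cp (AX j) \<omega>) * N \<omega> \<partial>M)"
  proof (rule nn_integral_cong_AE)
    show "AE \<omega> in M. ennreal (indicator B \<omega> * cp (AX j) \<omega> * enn2real (N \<omega>)) = indicator B \<omega> * ennreal (cp (AX j) \<omega>) * N \<omega>"
      using cp_nn[OF j] fin by eventually_elim (auto simp: indicator_def ennreal_mult ennreal_enn2real_if)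
  qed
  also have "\<dots> = (\<integral>\<^sup>+\<omega>. indicator B \<omega> * indicator (AX j) \<omega> * ennreal (g (Y \<omega>)) \<partial>M)"
    by (rule key[OF B])
  also have "\<dots> = (\<integral>\<^sup>+\<omega>. ennreal (indicator B \<omega> * indicator (AX j) \<omega> * g (Y \<omega>)) \<partial>M)"
    by (rule nn_integral_cong) (auto simp: indicator_def)
  also have "\<dots> = ennreal (\<integral>\<omega>. indicator B \<omega> * indicator (AX j) \<omega> * g (Y \<omega>) \<partial>M)"
    by (rule nn_integral_eq_integral[OF i2]) (auto simp: gnn)
  finally have e: "ennreal (\<integral>\<omega>. indicator B \<omega> * cp (AX j) \<omega> * enn2real (N \<omega>) \<partial>M)
        = ennreal (\<integral>\<omega>. indicator B \<omega> * indicator (AX j) \<omega> * g (Y \<omega>) \<partial>M)" .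
  have "0 \<le> (\<integral>\<omega>. indicator B \<omega> * cp (AX j) \<omega> * enn2real (N \<omega>) \<partial>M)"
    by (rule integral_nonneg_AE) (use cp_nn[OF j] in \<open>eventually_elim, auto\<close>)
  moreover have "0 \<le> (\<integral>\<omega>. indicator B \<omega> * indicator (AX j) \<omega> * g (Y \<omega>) \<partial>M)"
    by (rule integral_nonneg_AE) (auto simp: gnn)
  ultimately show "(\<integral>\<omega>. indicator B \<omega> * cp (AX j) \<omega> * enn2real (N \<omega>) \<partial>M)
        = (\<integral>\<omega>. indicator B \<omega> * indicator (AX j) \<omega> * g (Y \<omega>) \<partial>M)"
    using e by simp
qed


lemma int_cp:
  fixes h :: "_ \<Rightarrow> real"
  assumes j: "j \<in> {1..K}" and B[measurable]: "B \<in> sets M" and h[measurable]: "h \<in> borel_measurable M"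
    and hc: "\<And>\<omega>. \<omega> \<in> B \<Longrightarrow> \<bar>h \<omega>\<bar> \<le> c"
  shows "integrable M (\<lambda>\<omega>. indicator B \<omega> * cp (AX j) \<omega> * h \<omega>)"
proof (rule Bochner_Integration.integrable_bound[of _ "\<lambda>\<omega>. c * cp (AX j) \<omega>"])
  show "integrable M (\<lambda>\<omega>. c * cp (AX j) \<omega>)" using cp_int[OF AX_M[of j]] by simp
  show "AE \<omega> in M. norm (indicator B \<omega> * cp (AX j) \<omega> * h \<omega>) \<le> norm (c * cp (AX j) \<omega>)"
    using cp_nn[OF j] proof eventually_elim
    case (elim \<omega>)
    have "\<omega> \<in> B \<Longrightarrow> cp (AX j) \<omega> * \<bar>h \<omega>\<bar> \<le> cp (AX j) \<omega> * \<bar>c\<bar>"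
      using elim hc[of \<omega>] by (intro mult_left_mono) auto
    then show ?case using elim
      by (auto simp: indicator_def abs_mult mult.commute)
  qed
qed simp

lemma int_ind:
  fixes h :: "_ \<Rightarrow> real"
  assumes B[measurable]: "B \<in> sets M" and h[measurable]: "h \<in> borel_measurable M"
    and hc: "\<And>\<omega>. \<omega> \<in> B \<Longrightarrow> \<bar>h \<omega>\<bar> \<le> c"
  shows "integrable M (\<lambda>\<omega>. indicator B \<omega> * h \<omega>)"
  by (rule integrable_const_bound[where B="\<bar>c\<bar>"]) (auto simp: indicator_def intro!: AE_I2 order_trans[OF hc])

lemma f0_part:
  assumes j: "j \<in> {1..K}" and B: "B \<in> sets F" and Bc: "\<And>\<omega>. \<omega> \<in> B \<Longrightarrow> \<bar>f0 j (Z \<omega>)\<bar> \<le> c"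
  shows "(\<integral>\<omega>. indicator B \<omega> * cp (AX j) \<omega> * f0 j (Z \<omega>) \<partial>M) = (\<integral>\<omega>. indicator B \<omega> * indicator (AX j) \<omega> * Y \<omega> \<partial>M)"
proof -
  interpret Fs: sigma_finite_subalgebra M F by (rule F_sfs)
  interpret Gs: sigma_finite_subalgebra M G by (rule G_sfs)
  have BM[measurable]: "B \<in> sets M" using B by (rule sets_F_M)
  have BFm: "(\<lambda>\<omega>. indicator B \<omega> * f0 j (Z \<omega>)) \<in> borel_measurable F"
    using borel_measurable_indicator[OF B] by measurable
  have BG: "B \<inter> AX j \<in> sets G" using F_G[OF B] AX_G by auto
  have "(\<integral>\<omega>. indicator B \<omega> * cp (AX j) \<omega> * f0 j (Z \<omega>) \<partial>M)
      = (\<integral>\<omega>. (indicator B \<omega> * f0 j (Z \<omega>)) * cp (AX j) \<omega> \<partial>M)" by (simp add: ac_simps)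
  also have "\<dots> = (\<integral>\<omega>. (indicator B \<omega> * f0 j (Z \<omega>)) * indicator (AX j) \<omega> \<partial>M)"
  proof (rule Fs.real_cond_exp_intg(2)[OF _ BFm])
    show "integrable M (\<lambda>\<omega>. indicator B \<omega> * f0 j (Z \<omega>) * indicator (AX j) \<omega>)"
      using int_ind[OF BM f0_Z_M[of j] Bc] by (rule integrable_real_mult_indicator[OF AX_M])
  qed simp
  also have "\<dots> = (\<integral>\<omega>. indicator (B \<inter> AX j) \<omega> * f0 (X \<omega>) (Z \<omega>) \<partial>M)"
    by (rule Bochner_Integration.integral_cong) (auto simp: indicator_def)
  also have "\<dots> = (\<integral>\<omega>. indicator (B \<inter> AX j) \<omega> * real_cond_exp M G Y \<omega> \<partial>M)"
    by (rule integral_cong_AE) (use f0_cond in \<open>auto elim!: eventually_mono\<close>)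
  also have "\<dots> = (\<integral>\<omega>. indicator (B \<inter> AX j) \<omega> * Y \<omega> \<partial>M)"
  proof (rule Gs.real_cond_exp_intg(2))
    show "integrable M (\<lambda>\<omega>. indicator (B \<inter> AX j) \<omega> * Y \<omega>)"
      using integrable_mult_indicator[OF _ Y_int, of "B \<inter> AX j"] by simp
    show "indicator (B \<inter> AX j) \<in> borel_measurable G" using BG by (rule borel_measurable_indicator)
  qed simp
  also have "\<dots> = (\<integral>\<omega>. indicator B \<omega> * indicator (AX j) \<omega> * Y \<omega> \<partial>M)"
    by (rule Bochner_Integration.integral_cong) (auto simp: indicator_def)
  finally show ?thesis .
qed


lemma f0_m:
  assumes j: "j \<in> {1..K}"
  shows "AE \<omega> in M. f0 j (Z \<omega>) = m j (Z \<omega>)"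
proof -
  interpret Fs: sigma_finite_subalgebra M F by (rule F_sfs)
  define Np where "Np = nn_cond_exp M F (\<lambda>\<omega>. ennreal (max 0 (Ypot j \<omega>)))"
  define Nm where "Nm = nn_cond_exp M F (\<lambda>\<omega>. ennreal (max 0 (- Ypot j \<omega>)))"
  define u where "u = (\<lambda>\<omega>. f0 j (Z \<omega>))"
  define v where "v = (\<lambda>\<omega>. enn2real (Np \<omega>) - enn2real (Nm \<omega>))"
  have [measurable]: "Np \<in> borel_measurable F" "Nm \<in> borel_measurable F"
    "Np \<in> borel_measurable M" "Nm \<in> borel_measurable M"
    unfolding Np_def Nm_def by simp_all
  have uF[measurable]: "u \<in> borel_measurable F" "u \<in> borel_measurable M" unfolding u_def by simp_all
  have vF[measurable]: "v \<in> borel_measurable F" "v \<in> borel_measurable M" unfolding v_def by simp_all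
  have g1: "(\<lambda>y::real. max 0 y) \<in> borel_measurable borel" "\<And>y::real. 0 \<le> max 0 y" "\<And>y::real. max 0 y \<le> \<bar>y\<bar>"
    by auto
  have g2: "(\<lambda>y::real. max 0 (-y)) \<in> borel_measurable borel" "\<And>y::real. 0 \<le> max 0 (-y)" "\<And>y::real. max 0 (-y) \<le> \<bar>y\<bar>"
    by auto
  have intp: "\<And>B c. B \<in> sets F \<Longrightarrow> B \<subseteq> {\<omega>. enn2real (Np \<omega>) \<le> c} \<Longrightarrow>
          (\<integral>\<omega>. indicator B \<omega> * cp (AX j) \<omega> * enn2real (Np \<omega>) \<partial>M)
        = (\<integral>\<omega>. indicator B \<omega> * indicator (AX j) \<omega> * max 0 (Y \<omega>) \<partial>M)"
    using NN(2)[OF j g1] unfolding Np_def by simp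
  have intm: "\<And>B c. B \<in> sets F \<Longrightarrow> B \<subseteq> {\<omega>. enn2real (Nm \<omega>) \<le> c} \<Longrightarrow>
          (\<integral>\<omega>. indicator B \<omega> * cp (AX j) \<omega> * enn2real (Nm \<omega>) \<partial>M)
        = (\<integral>\<omega>. indicator B \<omega> * indicator (AX j) \<omega> * max 0 (- Y \<omega>) \<partial>M)"
    using NN(2)[OF j g2] unfolding Nm_def by simp
  have mv: "AE \<omega> in M. m j (Z \<omega>) = v \<omega>"
  proof -
    have e: "(\<lambda>x. ennreal (Ypot j x)) = (\<lambda>x. ennreal (max 0 (Ypot j x)))"
            "(\<lambda>x. ennreal (- Ypot j x)) = (\<lambda>x. ennreal (max 0 (- Ypot j x)))"
      by (simp_all add: ennreal_max_0)
    show ?thesis using m_cond j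
      unfolding v_def Np_def Nm_def real_cond_exp_def e by auto
  qed
  have zero: "(\<integral>\<omega>. indicator B \<omega> * cp (AX j) \<omega> * (u \<omega> - v \<omega>) \<partial>M) = 0"
    if B: "B \<in> sets F" and Bc: "B \<subseteq> {\<omega>. \<bar>u \<omega>\<bar> \<le> c \<and> enn2real (Np \<omega>) \<le> c \<and> enn2real (Nm \<omega>) \<le> c}" for B c
  proof -
    have BM[measurable]: "B \<in> sets M" using B by (rule sets_F_M)
    have i1: "integrable M (\<lambda>\<omega>. indicator B \<omega> * cp (AX j) \<omega> * u \<omega>)"
      by (rule int_cp[OF j BM, where c=c]) (use Bc in auto)
    have i2: "integrable M (\<lambda>\<omega>. indicator B \<omega> * cp (AX j) \<omega> * enn2real (Np \<omega>))"
      by (rule int_cp[OF j BM, where c=c]) (use Bc in auto)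
    have i3: "integrable M (\<lambda>\<omega>. indicator B \<omega> * cp (AX j) \<omega> * enn2real (Nm \<omega>))"
      by (rule int_cp[OF j BM, where c=c]) (use Bc in auto)
    have iY: "integrable M (\<lambda>\<omega>. indicator B \<omega> * indicator (AX j) \<omega> * h (Y \<omega>))"
      if "h \<in> borel_measurable borel" "\<And>y. \<bar>h y\<bar> \<le> \<bar>y\<bar>" for h
      by (rule Bochner_Integration.integrable_bound[OF Y_int])
         (use that in \<open>auto simp: indicator_def\<close>)
    have "(\<integral>\<omega>. indicator B \<omega> * cp (AX j) \<omega> * (u \<omega> - v \<omega>) \<partial>M)
        = (\<integral>\<omega>. indicator B \<omega> * cp (AX j) \<omega> * u \<omega> - indicator B \<omega> * cp (AX j) \<omega> * enn2real (Np \<omega>)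
              + indicator B \<omega> * cp (AX j) \<omega> * enn2real (Nm \<omega>) \<partial>M)"
      by (rule Bochner_Integration.integral_cong) (auto simp: v_def algebra_simps)
    also have "\<dots> = (\<integral>\<omega>. indicator B \<omega> * cp (AX j) \<omega> * u \<omega> \<partial>M)
        - (\<integral>\<omega>. indicator B \<omega> * cp (AX j) \<omega> * enn2real (Np \<omega>) \<partial>M)
        + (\<integral>\<omega>. indicator B \<omega> * cp (AX j) \<omega> * enn2real (Nm \<omega>) \<partial>M)"
      using i1 i2 i3 by simp
    also have "\<dots> = (\<integral>\<omega>. indicator B \<omega> * indicator (AX j) \<omega> * Y \<omega> \<partial>M)
        - (\<integral>\<omega>. indicator B \<omega> * indicator (AX j) \<omega> * max 0 (Y \<omega>) \<partial>M)
        + (\<integral>\<omega>. indicator B \<omega> * indicator (AX j) \<omega> * max 0 (- Y \<omega>) \<partial>M)"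
    proof -
      have "\<And>\<omega>. \<omega> \<in> B \<Longrightarrow> \<bar>f0 j (Z \<omega>)\<bar> \<le> c" using Bc unfolding u_def by auto
      note a = f0_part[OF j B, of c, OF this]
      have "B \<subseteq> {\<omega>. enn2real (Np \<omega>) \<le> c}" "B \<subseteq> {\<omega>. enn2real (Nm \<omega>) \<le> c}" using Bc by auto
      note b = intp[OF B this(1)] intm[OF B this(2)]
      show ?thesis unfolding u_def b using a by simp
    qed
    also have "\<dots> = (\<integral>\<omega>. indicator B \<omega> * indicator (AX j) \<omega> * Y \<omega>
        - indicator B \<omega> * indicator (AX j) \<omega> * max 0 (Y \<omega>)
        + indicator B \<omega> * indicator (AX j) \<omega> * max 0 (- Y \<omega>) \<partial>M)"
      using iY[of "\<lambda>y. y"] iY[of "\<lambda>y. max 0 y"] iY[of "\<lambda>y. max 0 (-y)"] by simp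
    also have "\<dots> = (\<integral>\<omega>. 0 \<partial>M)"
      by (rule Bochner_Integration.integral_cong) (auto simp: indicator_def max_def)
    also have "\<dots> = 0" by simp
    finally show ?thesis .
  qed
  have notin: "AE \<omega> in M. \<omega> \<notin> B"
    if B: "B \<in> sets F" and Bc: "B \<subseteq> {\<omega>. \<bar>u \<omega>\<bar> \<le> c \<and> enn2real (Np \<omega>) \<le> c \<and> enn2real (Nm \<omega>) \<le> c}"
      and s: "s = 1 \<or> s = -1" and Bs: "B \<subseteq> {\<omega>. 0 < s * (u \<omega> - v \<omega>)}" for B c and s :: real
  proof -
    have BM[measurable]: "B \<in> sets M" using B by (rule sets_F_M)
    have i: "integrable M (\<lambda>\<omega>. indicator B \<omega> * cp (AX j) \<omega> * (s * (u \<omega> - v \<omega>)))"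
    proof (rule int_cp[OF j BM, where c="3*c"])
      fix \<omega> assume "\<omega> \<in> B"
      then have h: "\<bar>u \<omega>\<bar> \<le> c" "enn2real (Np \<omega>) \<le> c" "enn2real (Nm \<omega>) \<le> c" using Bc by auto
      have "\<bar>u \<omega> - v \<omega>\<bar> \<le> 3 * c"
        using h enn2real_nonneg[of "Np \<omega>"] enn2real_nonneg[of "Nm \<omega>"] unfolding v_def abs_le_iff by linarith
      then show "\<bar>s * (u \<omega> - v \<omega>)\<bar> \<le> 3 * c" using s by (auto simp: abs_mult)
    qed simp
    have "(\<integral>\<omega>. indicator B \<omega> * cp (AX j) \<omega> * (s * (u \<omega> - v \<omega>)) \<partial>M)
        = s * (\<integral>\<omega>. indicator B \<omega> * cp (AX j) \<omega> * (u \<omega> - v \<omega>) \<partial>M)"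
      by (simp add: ac_simps)
    also have "\<dots> = 0" using zero[OF B Bc] by simp
    finally have "AE \<omega> in M. indicator B \<omega> * cp (AX j) \<omega> * (s * (u \<omega> - v \<omega>)) = 0"
      by (subst (asm) integral_nonneg_eq_0_iff_AE[OF i])
         (use cp_nn[OF j] Bs in \<open>auto simp: indicator_def elim!: eventually_mono\<close>)
    then show ?thesis using pos_AX[OF j]
    proof eventually_elim
      case (elim \<omega>)
      show ?case using elim Bs by (auto simp: indicator_def)
    qed
  qed
  define Bn0 where "Bn0 = (\<lambda>n::nat. {\<omega>\<in>space F. \<bar>u \<omega>\<bar> \<le> real n} \<inter> {\<omega>\<in>space F. enn2real (Np \<omega>) \<le> real n}
      \<inter> {\<omega>\<in>space F. enn2real (Nm \<omega>) \<le> real n})"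
  define Bn where "Bn = (\<lambda>n. Bn0 n \<inter> {\<omega>\<in>space F. v \<omega> < u \<omega>})"
  define Cn where "Cn = (\<lambda>n. Bn0 n \<inter> {\<omega>\<in>space F. u \<omega> < v \<omega>})"
  have B0: "Bn0 n \<in> sets F" for n
  proof -
    have "{\<omega>\<in>space F. \<bar>u \<omega>\<bar> \<le> real n} \<in> sets F" by measurable
    moreover have "{\<omega>\<in>space F. enn2real (Np \<omega>) \<le> real n} \<in> sets F" by measurable
    moreover have "{\<omega>\<in>space F. enn2real (Nm \<omega>) \<le> real n} \<in> sets F" by measurable
    ultimately show ?thesis unfolding Bn0_def by blast
  qed
  have BnF: "Bn n \<in> sets F" "Cn n \<in> sets F" for n
  proof -
    have "{\<omega>\<in>space F. v \<omega> < u \<omega>} \<in> sets F" by measurable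
    then show "Bn n \<in> sets F" unfolding Bn_def using B0 by blast
    have "{\<omega>\<in>space F. u \<omega> < v \<omega>} \<in> sets F" by measurable
    then show "Cn n \<in> sets F" unfolding Cn_def using B0 by blast
  qed
  have "AE \<omega> in M. \<forall>n. \<omega> \<notin> Bn n \<and> \<omega> \<notin> Cn n"
  proof (subst AE_all_countable, intro allI AE_conjI)
    fix n
    show "AE \<omega> in M. \<omega> \<notin> Bn n"
    proof (rule notin[OF BnF(1)])
      show "Bn n \<subseteq> {\<omega>. \<bar>u \<omega>\<bar> \<le> real n \<and> enn2real (Np \<omega>) \<le> real n \<and> enn2real (Nm \<omega>) \<le> real n}"
        by (auto simp: Bn_def Bn0_def)
      show "Bn n \<subseteq> {\<omega>. 0 < 1 * (u \<omega> - v \<omega>)}" by (auto simp: Bn_def Bn0_def)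
    qed simp
    show "AE \<omega> in M. \<omega> \<notin> Cn n"
    proof (rule notin[OF BnF(2)])
      show "Cn n \<subseteq> {\<omega>. \<bar>u \<omega>\<bar> \<le> real n \<and> enn2real (Np \<omega>) \<le> real n \<and> enn2real (Nm \<omega>) \<le> real n}"
        by (auto simp: Cn_def Bn0_def)
      show "Cn n \<subseteq> {\<omega>. 0 < (-1) * (u \<omega> - v \<omega>)}" by (auto simp: Cn_def Bn0_def)
    qed simp
  qed
  then show ?thesis using mv AE_space
  proof (eventually_elim)
    case (elim \<omega>)
    obtain n :: nat where n: "max \<bar>u \<omega>\<bar> (max (enn2real (Np \<omega>)) (enn2real (Nm \<omega>))) \<le> real n"
      using real_arch_simple by blast
    then show ?case using elim
      unfolding Bn_def Cn_def Bn0_def u_def by (auto simp: not_less)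
  qed
qed


lemma f0_MZ[measurable]: "f0 j \<in> borel_measurable MZ"
proof -
  have "(\<lambda>z. (\<lambda>(x, z). f0 x z) (j, z)) \<in> borel_measurable MZ"
    using f0_meas by measurable
  then show ?thesis by simp
qed

lemma h0_sq: "integrable M (\<lambda>\<omega>. (f0 (X \<omega>) (Z \<omega>))\<^sup>2)"
proof -
  interpret Gs: sigma_finite_subalgebra M G by (rule G_sfs)
  have "integrable M (\<lambda>\<omega>. (real_cond_exp M G Y \<omega>)\<^sup>2)"
    using Gs.integrable_convex_cond_exp[of Y UNIV 0 0 power2] Y_int Y_sq convex_power2 by simp
  moreover have "(\<lambda>\<omega>. f0 (X \<omega>) (Z \<omega>)) \<in> borel_measurable M"
  proof -
    have "(\<lambda>\<omega>. (\<lambda>(x, z). f0 x z) (X \<omega>, Z \<omega>)) \<in> borel_measurable M"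
      using f0_meas by measurable
    then show ?thesis by simp
  qed
  then have "(\<lambda>\<omega>. (f0 (X \<omega>) (Z \<omega>))\<^sup>2) \<in> borel_measurable M" by measurable
  ultimately show ?thesis
    by (rule integrable_cong_AE_imp) (use f0_cond in \<open>auto elim!: eventually_mono\<close>)
qed

lemma sq_le: "(a - b)\<^sup>2 \<le> 2 * a\<^sup>2 + 2 * (b::real)\<^sup>2"
  by (smt (verit) power2_diff sum_squares_ge_zero power2_sum zero_le_power2)

lemma abs_prod_le_sq: "\<bar>a * b\<bar> \<le> a\<^sup>2 + (b::real)\<^sup>2"
proof -
  have "0 \<le> (\<bar>a\<bar> - \<bar>b\<bar>)\<^sup>2" by simp
  also have "(\<bar>a\<bar> - \<bar>b\<bar>)\<^sup>2 = a\<^sup>2 + b\<^sup>2 - 2 * \<bar>a\<bar> * \<bar>b\<bar>" by (simp add: power2_diff)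
  finally have "2 * \<bar>a\<bar> * \<bar>b\<bar> \<le> a\<^sup>2 + b\<^sup>2" by simp
  moreover have "0 \<le> \<bar>a\<bar> * \<bar>b\<bar>" by simp
  ultimately show ?thesis unfolding abs_mult by linarith
qed

lemma e_int: "integrable M (\<lambda>\<omega>. (Y \<omega> - f0 (X \<omega>) (Z \<omega>))\<^sup>2)"
proof (rule Bochner_Integration.integrable_bound[of _ "\<lambda>\<omega>. 2 * (Y \<omega>)\<^sup>2 + 2 * (f0 (X \<omega>) (Z \<omega>))\<^sup>2"])
  show "integrable M (\<lambda>\<omega>. 2 * (Y \<omega>)\<^sup>2 + 2 * (f0 (X \<omega>) (Z \<omega>))\<^sup>2)"
    using Y_sq h0_sq by simp
  have "(\<lambda>\<omega>. (\<lambda>(x, z). f0 x z) (X \<omega>, Z \<omega>)) \<in> borel_measurable M"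
    using f0_meas by measurable
  then show "(\<lambda>\<omega>. (Y \<omega> - f0 (X \<omega>) (Z \<omega>))\<^sup>2) \<in> borel_measurable M" by simp
  show "AE \<omega> in M. norm ((Y \<omega> - f0 (X \<omega>) (Z \<omega>))\<^sup>2) \<le> norm (2 * (Y \<omega>)\<^sup>2 + 2 * (f0 (X \<omega>) (Z \<omega>))\<^sup>2)"
    using sq_le by auto
qed


end

context gvim begin

lemma ind_cs[measurable]: "(indicator {k} :: nat \<Rightarrow> real) \<in> borel_measurable (count_space UNIV)"
  by simp

lemma decomp:
  assumes k: "k \<in> {1..K}" and j: "j \<in> {1..K}"
  shows "(\<integral>\<^sup>+\<omega>. indicator (AX k) \<omega> * ennreal ((Y \<omega> - f0 j (Z \<omega>))\<^sup>2) \<partial>M)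
     = (\<integral>\<^sup>+\<omega>. indicator (AX k) \<omega> * ennreal ((Y \<omega> - f0 k (Z \<omega>))\<^sup>2) \<partial>M)
     + (\<integral>\<^sup>+\<omega>. indicator (AX k) \<omega> * ennreal ((f0 k (Z \<omega>) - f0 j (Z \<omega>))\<^sup>2) \<partial>M)"
    and "(\<integral>\<^sup>+\<omega>. indicator (AX k) \<omega> * ennreal ((Y \<omega> - f0 k (Z \<omega>))\<^sup>2) \<partial>M) \<noteq> \<infinity>"
proof -
  interpret Gs: sigma_finite_subalgebra M G by (rule G_sfs)
  define I where "I = (\<lambda>\<omega>. indicator {k} (X \<omega>) :: real)"
  define e where "e = (\<lambda>\<omega>. I \<omega> * (Y \<omega> - f0 k (Z \<omega>)))"
  define d where "d = (\<lambda>\<omega>. I \<omega> * (f0 k (Z \<omega>) - f0 j (Z \<omega>)))"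
  have [measurable]: "I \<in> borel_measurable M" unfolding I_def by measurable
  have [measurable]: "e \<in> borel_measurable M" "d \<in> borel_measurable M" unfolding e_def d_def by measurable
  have I01: "I \<omega> = 0 \<or> I \<omega> = 1" for \<omega> unfolding I_def by (auto simp: indicator_def)
  have IA: "\<omega> \<in> space M \<Longrightarrow> indicator (AX k) \<omega> = I \<omega>" for \<omega> unfolding I_def by (auto simp: indicator_def)
  have conv: "indicator (AX k) \<omega> * ennreal (x\<^sup>2) = ennreal ((I \<omega> * x)\<^sup>2)" if "\<omega> \<in> space M" for \<omega> x
    using that unfolding I_def by (auto simp: indicator_def)
  have T: "(\<integral>\<^sup>+\<omega>. indicator (AX k) \<omega> * ennreal ((Y \<omega> - f0 j (Z \<omega>))\<^sup>2) \<partial>M) = (\<integral>\<^sup>+\<omega>. ennreal ((e \<omega> + d \<omega>)\<^sup>2) \<partial>M)"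
  proof (rule nn_integral_cong)
    fix \<omega> assume w: "\<omega> \<in> space M"
    have "e \<omega> + d \<omega> = I \<omega> * (Y \<omega> - f0 j (Z \<omega>))" unfolding e_def d_def by (simp add: algebra_simps)
    then show "indicator (AX k) \<omega> * ennreal ((Y \<omega> - f0 j (Z \<omega>))\<^sup>2) = ennreal ((e \<omega> + d \<omega>)\<^sup>2)"
      using conv[OF w] by simp
  qed
  have D: "(\<integral>\<^sup>+\<omega>. indicator (AX k) \<omega> * ennreal ((Y \<omega> - f0 k (Z \<omega>))\<^sup>2) \<partial>M) = (\<integral>\<^sup>+\<omega>. ennreal ((e \<omega>)\<^sup>2) \<partial>M)"
    by (rule nn_integral_cong) (simp add: conv e_def)
  have Q: "(\<integral>\<^sup>+\<omega>. indicator (AX k) \<omega> * ennreal ((f0 k (Z \<omega>) - f0 j (Z \<omega>))\<^sup>2) \<partial>M) = (\<integral>\<^sup>+\<omega>. ennreal ((d \<omega>)\<^sup>2) \<partial>M)"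
    by (rule nn_integral_cong) (simp add: conv d_def)
  have e2: "integrable M (\<lambda>\<omega>. (e \<omega>)\<^sup>2)"
  proof (rule Bochner_Integration.integrable_bound[OF e_int])
    show "AE \<omega> in M. norm ((e \<omega>)\<^sup>2) \<le> norm ((Y \<omega> - f0 (X \<omega>) (Z \<omega>))\<^sup>2)"
      using I01 unfolding e_def I_def by (auto simp: indicator_def split: if_splits)
  qed simp
  have Dfin: "(\<integral>\<^sup>+\<omega>. ennreal ((e \<omega>)\<^sup>2) \<partial>M) = ennreal (\<integral>\<omega>. (e \<omega>)\<^sup>2 \<partial>M)"
    by (rule nn_integral_eq_integral[OF e2]) simp
  then show "(\<integral>\<^sup>+\<omega>. indicator (AX k) \<omega> * ennreal ((Y \<omega> - f0 k (Z \<omega>))\<^sup>2) \<partial>M) \<noteq> \<infinity>"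
    unfolding D by simp
  show "(\<integral>\<^sup>+\<omega>. indicator (AX k) \<omega> * ennreal ((Y \<omega> - f0 j (Z \<omega>))\<^sup>2) \<partial>M)
     = (\<integral>\<^sup>+\<omega>. indicator (AX k) \<omega> * ennreal ((Y \<omega> - f0 k (Z \<omega>))\<^sup>2) \<partial>M)
     + (\<integral>\<^sup>+\<omega>. indicator (AX k) \<omega> * ennreal ((f0 k (Z \<omega>) - f0 j (Z \<omega>))\<^sup>2) \<partial>M)"
  proof (cases "(\<integral>\<^sup>+\<omega>. ennreal ((d \<omega>)\<^sup>2) \<partial>M) = \<infinity>")
    case True
    have "(\<integral>\<^sup>+\<omega>. ennreal ((d \<omega>)\<^sup>2) \<partial>M) \<le> (\<integral>\<^sup>+\<omega>. 2 * ennreal ((e \<omega> + d \<omega>)\<^sup>2) + 2 * ennreal ((e \<omega>)\<^sup>2) \<partial>M)"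
    proof (rule nn_integral_mono)
      fix \<omega>
      have "(d \<omega>)\<^sup>2 \<le> 2 * (e \<omega> + d \<omega>)\<^sup>2 + 2 * (e \<omega>)\<^sup>2"
        using sq_le[of "e \<omega> + d \<omega>" "e \<omega>"] by simp
      then have "ennreal ((d \<omega>)\<^sup>2) \<le> ennreal (2 * (e \<omega> + d \<omega>)\<^sup>2 + 2 * (e \<omega>)\<^sup>2)"
        by (rule ennreal_leI)
      also have "\<dots> = 2 * ennreal ((e \<omega> + d \<omega>)\<^sup>2) + 2 * ennreal ((e \<omega>)\<^sup>2)"
        by (simp add: ennreal_plus ennreal_mult)
      finally show "ennreal ((d \<omega>)\<^sup>2) \<le> 2 * ennreal ((e \<omega> + d \<omega>)\<^sup>2) + 2 * ennreal ((e \<omega>)\<^sup>2)" .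
    qed
    also have "\<dots> = 2 * (\<integral>\<^sup>+\<omega>. ennreal ((e \<omega> + d \<omega>)\<^sup>2) \<partial>M) + 2 * (\<integral>\<^sup>+\<omega>. ennreal ((e \<omega>)\<^sup>2) \<partial>M)"
      by (simp add: nn_integral_add nn_integral_cmult)
    finally have "(\<integral>\<^sup>+\<omega>. ennreal ((e \<omega> + d \<omega>)\<^sup>2) \<partial>M) = \<infinity>"
      using True Dfin by (auto simp: top_unique ennreal_mult_eq_top_iff)
    then show ?thesis using True T D Q by simp
  next
    case False
    have d2: "integrable M (\<lambda>\<omega>. (d \<omega>)\<^sup>2)"
      by (rule integrableI_bounded) (use False in \<open>auto simp: less_top\<close>)
    define W where "W = (\<lambda>\<omega>. indicator {k} (X \<omega>) * (f0 k (Z \<omega>) - f0 j (Z \<omega>)) :: real)"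
    have WG: "W \<in> borel_measurable G"
    proof -
      have "(\<lambda>p. indicator {k} (fst p) * (f0 k (snd p) - f0 j (snd p)) :: real) \<in> borel_measurable (count_space UNIV \<Otimes>\<^sub>M MZ)"
        by measurable
      from measurable_compose[OF XZ_G this] show ?thesis unfolding W_def by simp
    qed
    have [measurable]: "W \<in> borel_measurable M" unfolding W_def by measurable
    have Wd: "W = d" unfolding W_def d_def I_def by simp
    have WY: "integrable M (\<lambda>\<omega>. W \<omega> * Y \<omega>)"
    proof (rule Bochner_Integration.integrable_bound[of _ "\<lambda>\<omega>. (d \<omega>)\<^sup>2 + (Y \<omega>)\<^sup>2"])
      show "integrable M (\<lambda>\<omega>. (d \<omega>)\<^sup>2 + (Y \<omega>)\<^sup>2)" using d2 Y_sq by simp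
      show "AE \<omega> in M. norm (W \<omega> * Y \<omega>) \<le> norm ((d \<omega>)\<^sup>2 + (Y \<omega>)\<^sup>2)"
        unfolding Wd by (intro AE_I2) (simp add: abs_prod_le_sq)
    qed simp
    have ed: "AE \<omega> in M. e \<omega> * d \<omega> = W \<omega> * Y \<omega> - W \<omega> * real_cond_exp M G Y \<omega>"
      using f0_cond proof eventually_elim
      case (elim \<omega>)
      show ?case using I01[of \<omega>] unfolding e_def d_def W_def I_def elim[symmetric]
        by (auto simp: indicator_def algebra_simps)
    qed
    have WR: "integrable M (\<lambda>\<omega>. W \<omega> * real_cond_exp M G Y \<omega>)"
      by (rule Gs.real_cond_exp_intg(1)[OF WY WG]) simp
    have WR2: "(\<integral>\<omega>. W \<omega> * real_cond_exp M G Y \<omega> \<partial>M) = (\<integral>\<omega>. W \<omega> * Y \<omega> \<partial>M)"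
      by (rule Gs.real_cond_exp_intg(2)[OF WY WG]) simp
    have edi: "integrable M (\<lambda>\<omega>. e \<omega> * d \<omega>)"
      by (rule integrable_cong_AE_imp[OF Bochner_Integration.integrable_diff[OF WY WR]])
         (use ed in \<open>auto elim!: eventually_mono\<close>)
    have ed0: "(\<integral>\<omega>. e \<omega> * d \<omega> \<partial>M) = 0"
    proof -
      have "(\<integral>\<omega>. e \<omega> * d \<omega> \<partial>M) = (\<integral>\<omega>. W \<omega> * Y \<omega> - W \<omega> * real_cond_exp M G Y \<omega> \<partial>M)"
        by (rule integral_cong_AE) (use ed in \<open>auto elim!: eventually_mono\<close>)
      also have "\<dots> = 0" using WY WR WR2 by simp
      finally show ?thesis .
    qed
    have sqi: "integrable M (\<lambda>\<omega>. (e \<omega> + d \<omega>)\<^sup>2)"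
    proof -
      have "integrable M (\<lambda>\<omega>. (e \<omega>)\<^sup>2 + 2 * (e \<omega> * d \<omega>) + (d \<omega>)\<^sup>2)"
        using e2 edi d2 by simp
      then show ?thesis by (simp add: power2_sum algebra_simps)
    qed
    have "(\<integral>\<omega>. (e \<omega> + d \<omega>)\<^sup>2 \<partial>M) = (\<integral>\<omega>. (e \<omega>)\<^sup>2 + 2 * (e \<omega> * d \<omega>) + (d \<omega>)\<^sup>2 \<partial>M)"
      by (simp add: power2_sum algebra_simps)
    also have "\<dots> = (\<integral>\<omega>. (e \<omega>)\<^sup>2 \<partial>M) + (\<integral>\<omega>. (d \<omega>)\<^sup>2 \<partial>M)"
      using e2 edi d2 ed0 by simp
    finally have sum_eq: "(\<integral>\<omega>. (e \<omega> + d \<omega>)\<^sup>2 \<partial>M) = (\<integral>\<omega>. (e \<omega>)\<^sup>2 \<partial>M) + (\<integral>\<omega>. (d \<omega>)\<^sup>2 \<partial>M)" .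
    have "(\<integral>\<^sup>+\<omega>. ennreal ((e \<omega> + d \<omega>)\<^sup>2) \<partial>M) = ennreal (\<integral>\<omega>. (e \<omega> + d \<omega>)\<^sup>2 \<partial>M)"
      by (rule nn_integral_eq_integral[OF sqi]) simp
    also have "\<dots> = ennreal (\<integral>\<omega>. (e \<omega>)\<^sup>2 \<partial>M) + ennreal (\<integral>\<omega>. (d \<omega>)\<^sup>2 \<partial>M)"
      unfolding sum_eq by (rule ennreal_plus) simp_all
    also have "\<dots> = (\<integral>\<^sup>+\<omega>. ennreal ((e \<omega>)\<^sup>2) \<partial>M) + (\<integral>\<^sup>+\<omega>. ennreal ((d \<omega>)\<^sup>2) \<partial>M)"
      using nn_integral_eq_integral[OF d2] Dfin by simp
    finally show ?thesis using T D Q by simp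
  qed
qed

end

context gvim begin

lemma split_X:
  assumes a: "a \<in> space M"
  shows "(\<Sum>j\<in>{1..K}. c j * indicator (AX j) a) = (c (X a) :: ennreal)"
proof -
  have "X a \<in> {1..K}" using X_range a by auto
  then have "(\<Sum>j\<in>{1..K}. c j * indicator (AX j) a) = (\<Sum>j\<in>{1..K}. if j = X a then c j else 0)"
    using a by (intro sum.cong) (auto simp: indicator_def)
  also have "\<dots> = c (X a)" using \<open>X a \<in> {1..K}\<close> by (simp add: sum.delta)
  finally show ?thesis .
qed

lemma int_X:
  "(\<integral>\<^sup>+b. c (X b) \<partial>M) = (\<Sum>j\<in>{1..K}. c j * ennreal (measure M (AX j)))"
proof -
  have "(\<integral>\<^sup>+b. c (X b) \<partial>M) = (\<integral>\<^sup>+b. (\<Sum>j\<in>{1..K}. c j * indicator (AX j) b) \<partial>M)"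
    by (rule nn_integral_cong) (rule split_X[symmetric])
  also have "\<dots> = (\<Sum>j\<in>{1..K}. (\<integral>\<^sup>+b. c j * indicator (AX j) b \<partial>M))"
    by (rule nn_integral_sum) auto
  also have "\<dots> = (\<Sum>j\<in>{1..K}. c j * ennreal (measure M (AX j)))"
    by (intro sum.cong refl) (simp add: nn_integral_cmult_indicator emeasure_eq_measure)
  finally show ?thesis .
qed

lemma split_int:
  assumes g[measurable]: "g \<in> borel_measurable M"
  shows "(\<integral>\<^sup>+b. g b \<partial>M) = (\<Sum>k\<in>{1..K}. \<integral>\<^sup>+b. indicator (AX k) b * g b \<partial>M)"
proof -
  have "(\<integral>\<^sup>+b. g b \<partial>M) = (\<integral>\<^sup>+b. (\<Sum>k\<in>{1..K}. indicator (AX k) b * g b) \<partial>M)"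
  proof (rule nn_integral_cong)
    fix b assume b: "b \<in> space M"
    have "(\<Sum>k\<in>{1..K}. indicator (AX k) b * g b) = (\<Sum>k\<in>{1..K}. (\<lambda>_. 1::ennreal) k * indicator (AX k) b) * g b"
      by (simp add: sum_distrib_right)
    also have "\<dots> = g b" unfolding split_X[OF b] by simp
    finally show "g b = (\<Sum>k\<in>{1..K}. indicator (AX k) b * g b)" by simp
  qed
  also have "\<dots> = (\<Sum>k\<in>{1..K}. \<integral>\<^sup>+b. indicator (AX k) b * g b \<partial>M)"
    by (rule nn_integral_sum) auto
  finally show ?thesis .
qed

lemma sum_p: "(\<Sum>j\<in>{1..K}. ennreal (measure M (AX j))) = 1"
proof -
  have "(1::ennreal) = (\<integral>\<^sup>+b. 1 \<partial>M)" by (simp add: emeasure_space_1)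
  also have "\<dots> = (\<Sum>j\<in>{1..K}. 1 * ennreal (measure M (AX j)))"
    using int_X[of "\<lambda>_. 1"] by simp
  finally show ?thesis by simp
qed


lemma main:
  "(\<integral>\<^sup>+ \<omega>. ennreal ((Y (fst \<omega>) - f0 (X (snd \<omega>)) (Z (fst \<omega>)))\<^sup>2) \<partial>(M \<Otimes>\<^sub>M M))
         - (\<integral>\<^sup>+ \<omega>. ennreal ((Y \<omega> - f0 (X \<omega>) (Z \<omega>))\<^sup>2) \<partial>M)
       = (\<Sum>k\<in>{1..K}. \<Sum>j\<in>{1..K} - {k}.
            ennreal (measure M {\<omega>\<in>space M. X \<omega> = k} * measure M {\<omega>\<in>space M. X \<omega> = j}) *
            (\<integral>\<^sup>+ z. ennreal ((m k z - m j z)\<^sup>2)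
               \<partial>(distr (uniform_measure M {\<omega>\<in>space M. X \<omega> = k}) MZ Z)))"
proof -
  define p where "p = (\<lambda>j. ennreal (measure M (AX j)))"
  define T where "T = (\<lambda>k j. \<integral>\<^sup>+\<omega>. indicator (AX k) \<omega> * ennreal ((Y \<omega> - f0 j (Z \<omega>))\<^sup>2) \<partial>M)"
  define D where "D = (\<lambda>k. \<integral>\<^sup>+\<omega>. indicator (AX k) \<omega> * ennreal ((Y \<omega> - f0 k (Z \<omega>))\<^sup>2) \<partial>M)"
  define Q where "Q = (\<lambda>k j. \<integral>\<^sup>+\<omega>. indicator (AX k) \<omega> * ennreal ((f0 k (Z \<omega>) - f0 j (Z \<omega>))\<^sup>2) \<partial>M)"
  have TDQ: "k \<in> {1..K} \<Longrightarrow> j \<in> {1..K} \<Longrightarrow> T k j = D k + Q k j" for k j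
    unfolding T_def D_def Q_def by (rule decomp(1))
  have Dfin: "k \<in> {1..K} \<Longrightarrow> D k \<noteq> \<infinity>" for k
    unfolding D_def using decomp(2)[of k k] by simp
  have f0m[measurable]: "(\<lambda>\<omega>. f0 (X (snd \<omega>)) (Z (fst \<omega>))) \<in> borel_measurable (M \<Otimes>\<^sub>M M)"
  proof -
    have "(\<lambda>\<omega>. (\<lambda>(x, z). f0 x z) (X (snd \<omega>), Z (fst \<omega>))) \<in> borel_measurable (M \<Otimes>\<^sub>M M)"
      using f0_meas by measurable
    then show ?thesis by simp
  qed
  have f0m2[measurable]: "(\<lambda>\<omega>. f0 (X \<omega>) (Z \<omega>)) \<in> borel_measurable M"
  proof -
    have "(\<lambda>\<omega>. (\<lambda>(x, z). f0 x z) (X \<omega>, Z \<omega>)) \<in> borel_measurable M"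
      using f0_meas by measurable
    then show ?thesis by simp
  qed
  have L1: "(\<integral>\<^sup>+ \<omega>. ennreal ((Y (fst \<omega>) - f0 (X (snd \<omega>)) (Z (fst \<omega>)))\<^sup>2) \<partial>(M \<Otimes>\<^sub>M M))
      = (\<Sum>j\<in>{1..K}. p j * (\<Sum>k\<in>{1..K}. T k j))"
  proof -
    have "(\<integral>\<^sup>+ \<omega>. ennreal ((Y (fst \<omega>) - f0 (X (snd \<omega>)) (Z (fst \<omega>)))\<^sup>2) \<partial>(M \<Otimes>\<^sub>M M))
        = (\<integral>\<^sup>+ a. \<integral>\<^sup>+ b. ennreal ((Y a - f0 (X b) (Z a))\<^sup>2) \<partial>M \<partial>M)"
      by (subst nn_integral_fst[symmetric]) simp_all
    also have "\<dots> = (\<integral>\<^sup>+ a. (\<Sum>j\<in>{1..K}. p j * ennreal ((Y a - f0 j (Z a))\<^sup>2)) \<partial>M)"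
      by (rule nn_integral_cong) (simp add: int_X[of "\<lambda>j. ennreal ((Y _ - f0 j (Z _))\<^sup>2)"] p_def mult.commute)
    also have "\<dots> = (\<Sum>j\<in>{1..K}. p j * (\<integral>\<^sup>+ a. ennreal ((Y a - f0 j (Z a))\<^sup>2) \<partial>M))"
      by (subst nn_integral_sum) (auto simp: nn_integral_cmult)
    also have "\<dots> = (\<Sum>j\<in>{1..K}. p j * (\<Sum>k\<in>{1..K}. T k j))"
      unfolding T_def by (subst split_int) auto
    finally show ?thesis .
  qed
  have L2: "(\<integral>\<^sup>+ \<omega>. ennreal ((Y \<omega> - f0 (X \<omega>) (Z \<omega>))\<^sup>2) \<partial>M) = (\<Sum>j\<in>{1..K}. p j * (\<Sum>k\<in>{1..K}. D k))"
  proof -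
    have "(\<integral>\<^sup>+ \<omega>. ennreal ((Y \<omega> - f0 (X \<omega>) (Z \<omega>))\<^sup>2) \<partial>M) = (\<Sum>k\<in>{1..K}. D k)"
      unfolding D_def
      by (subst split_int) (auto intro!: sum.cong nn_integral_cong simp: indicator_def)
    also have "\<dots> = (\<Sum>j\<in>{1..K}. p j) * (\<Sum>k\<in>{1..K}. D k)" using sum_p by (simp add: p_def)
    also have "\<dots> = (\<Sum>j\<in>{1..K}. p j * (\<Sum>k\<in>{1..K}. D k))" by (simp add: sum_distrib_right)
    finally show ?thesis .
  qed
  have L2fin: "(\<Sum>j\<in>{1..K}. p j * (\<Sum>k\<in>{1..K}. D k)) \<noteq> \<infinity>"
    using Dfin by (simp add: p_def ennreal_mult_eq_top_iff)
  have "(\<Sum>j\<in>{1..K}. p j * (\<Sum>k\<in>{1..K}. T k j)) = (\<Sum>j\<in>{1..K}. p j * (\<Sum>k\<in>{1..K}. D k)) + (\<Sum>j\<in>{1..K}. p j * (\<Sum>k\<in>{1..K}. Q k j))"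
    by (simp add: TDQ sum.distrib distrib_left)
  then have "(\<integral>\<^sup>+ \<omega>. ennreal ((Y (fst \<omega>) - f0 (X (snd \<omega>)) (Z (fst \<omega>)))\<^sup>2) \<partial>(M \<Otimes>\<^sub>M M))
         - (\<integral>\<^sup>+ \<omega>. ennreal ((Y \<omega> - f0 (X \<omega>) (Z \<omega>))\<^sup>2) \<partial>M) = (\<Sum>j\<in>{1..K}. p j * (\<Sum>k\<in>{1..K}. Q k j))"
    unfolding L1 L2 by (simp only: ennreal_add_diff_cancel_left[OF L2fin[unfolded infinity_ennreal_def]])
  also have "\<dots> = (\<Sum>k\<in>{1..K}. \<Sum>j\<in>{1..K}. p j * Q k j)"
    by (simp add: sum_distrib_left) (rule sum.swap)
  finally have LHS: "(\<integral>\<^sup>+ \<omega>. ennreal ((Y (fst \<omega>) - f0 (X (snd \<omega>)) (Z (fst \<omega>)))\<^sup>2) \<partial>(M \<Otimes>\<^sub>M M))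
         - (\<integral>\<^sup>+ \<omega>. ennreal ((Y \<omega> - f0 (X \<omega>) (Z \<omega>))\<^sup>2) \<partial>M) = (\<Sum>k\<in>{1..K}. \<Sum>j\<in>{1..K}. p j * Q k j)" .
  have RHS: "ennreal (measure M (AX k) * measure M (AX j)) *
            (\<integral>\<^sup>+ z. ennreal ((m k z - m j z)\<^sup>2) \<partial>(distr (uniform_measure M (AX k)) MZ Z)) = p j * Q k j"
    if k: "k \<in> {1..K}" and j: "j \<in> {1..K}" for k j
  proof -
    have mk[measurable]: "m k \<in> borel_measurable MZ" "m j \<in> borel_measurable MZ" using m_meas k j by auto
    have Zu: "Z \<in> measurable (uniform_measure M (AX k)) MZ"
      by (simp add: measurable_cong_sets[OF sets_uniform_measure refl])
    have "(\<integral>\<^sup>+ z. ennreal ((m k z - m j z)\<^sup>2) \<partial>(distr (uniform_measure M (AX k)) MZ Z))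
        = (\<integral>\<^sup>+ \<omega>. ennreal ((m k (Z \<omega>) - m j (Z \<omega>))\<^sup>2) \<partial>uniform_measure M (AX k))"
      by (rule nn_integral_distr[OF Zu]) simp
    also have "\<dots> = (\<integral>\<^sup>+ \<omega>. ennreal ((m k (Z \<omega>) - m j (Z \<omega>))\<^sup>2) * indicator (AX k) \<omega> \<partial>M) / emeasure M (AX k)"
      by (rule nn_integral_uniform_measure) simp_all
    also have "(\<integral>\<^sup>+ \<omega>. ennreal ((m k (Z \<omega>) - m j (Z \<omega>))\<^sup>2) * indicator (AX k) \<omega> \<partial>M) = Q k j"
      unfolding Q_def
    proof (rule nn_integral_cong_AE)
      show "AE \<omega> in M. ennreal ((m k (Z \<omega>) - m j (Z \<omega>))\<^sup>2) * indicator (AX k) \<omega> =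
          indicator (AX k) \<omega> * ennreal ((f0 k (Z \<omega>) - f0 j (Z \<omega>))\<^sup>2)"
        using f0_m[OF k] f0_m[OF j] by eventually_elim (simp add: mult.commute)
    qed
    finally have e: "(\<integral>\<^sup>+ z. ennreal ((m k z - m j z)\<^sup>2) \<partial>(distr (uniform_measure M (AX k)) MZ Z))
       = Q k j / ennreal (measure M (AX k))" by (simp add: emeasure_eq_measure)
    have pk: "measure M (AX k) > 0" using p_pos k by auto
    have "ennreal (measure M (AX k) * measure M (AX j)) * (Q k j / ennreal (measure M (AX k)))
       = (p j * Q k j * ennreal (measure M (AX k))) / ennreal (measure M (AX k))"
      by (simp add: ennreal_mult ennreal_times_divide p_def mult_ac)
    also have "\<dots> = p j * Q k j" by (rule ennreal_mult_divide_eq) (use pk in auto)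
    finally show ?thesis using e by simp
  qed
  have Qkk: "Q k k = 0" for k unfolding Q_def by simp
  have "(\<Sum>k\<in>{1..K}. \<Sum>j\<in>{1..K}. p j * Q k j) = (\<Sum>k\<in>{1..K}. \<Sum>j\<in>{1..K} - {k}. p j * Q k j)"
  proof (rule sum.cong[OF refl])
    fix k assume k: "k \<in> {1..K}"
    show "(\<Sum>j\<in>{1..K}. p j * Q k j) = (\<Sum>j\<in>{1..K} - {k}. p j * Q k j)"
      using sum.remove[OF _ k, of "\<lambda>j. p j * Q k j"] by (simp add: Qkk)
  qed
  also have "\<dots> = (\<Sum>k\<in>{1..K}. \<Sum>j\<in>{1..K} - {k}.
            ennreal (measure M (AX k) * measure M (AX j)) *
            (\<integral>\<^sup>+ z. ennreal ((m k z - m j z)\<^sup>2) \<partial>(distr (uniform_measure M (AX k)) MZ Z)))"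
    by (intro sum.cong refl) (simp add: RHS)
  finally show ?thesis using LHS by simp
qed

end

theorem theorem1:
  fixes M :: "'a measure" and MZ :: "'z measure" and K :: nat
    and Y :: "'a \<Rightarrow> real" and X :: "'a \<Rightarrow> nat" and Z :: "'a \<Rightarrow> 'z"
    and Ypot :: "nat \<Rightarrow> 'a \<Rightarrow> real"
    and f0 :: "nat \<Rightarrow> 'z \<Rightarrow> real" and m :: "nat \<Rightarrow> 'z \<Rightarrow> real"
  assumes P: "prob_space M"
    and Y_meas: "Y \<in> borel_measurable M"
    and Y_sq: "integrable M (\<lambda>\<omega>. (Y \<omega>)\<^sup>2)"
    and X_meas: "X \<in> measurable M (count_space UNIV)"
    and X_range: "\<forall>\<omega>\<in>space M. X \<omega> \<in> {1..K}"
    and p_pos: "\<forall>k\<in>{1..K}. measure M {\<omega>\<in>space M. X \<omega> = k} > 0"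
    and Z_meas: "Z \<in> measurable M MZ"
    and Ypot_meas: "\<forall>k\<in>{1..K}. Ypot k \<in> borel_measurable M"
    and consistency: "AE \<omega> in M. Y \<omega> = Ypot (X \<omega>) \<omega>"
    and positivity: "\<forall>k\<in>{1..K}. AE \<omega> in M.
           0 < cond_prob_given M (sigma_rv M Z MZ) {\<omega>'\<in>space M. X \<omega>' = k} \<omega> \<and>
           cond_prob_given M (sigma_rv M Z MZ) {\<omega>'\<in>space M. X \<omega>' = k} \<omega> < 1"
    and ignorability: "cond_indep_rv M (PiM {1..K} (\<lambda>_. borel)) (\<lambda>\<omega>. restrict (\<lambda>k. Ypot k \<omega>) {1..K})
                         (count_space UNIV) X MZ Z"
    \<comment> \<open>f0 is (a version of) E(Y | X = x, Z = z)\<close>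
    and f0_meas: "(\<lambda>(x, z). f0 x z) \<in> borel_measurable (count_space UNIV \<Otimes>\<^sub>M MZ)"
    and f0_cond: "AE \<omega> in M. f0 (X \<omega>) (Z \<omega>) =
           real_cond_exp M (sigma_rv M (\<lambda>\<omega>. (X \<omega>, Z \<omega>)) (count_space UNIV \<Otimes>\<^sub>M MZ)) Y \<omega>"
    \<comment> \<open>m k is (a version of) z \<mapsto> E(Y_k | Z = z)\<close>
    and m_meas: "\<forall>k\<in>{1..K}. m k \<in> borel_measurable MZ"
    and m_cond: "\<forall>k\<in>{1..K}. AE \<omega> in M. m k (Z \<omega>) = real_cond_exp M (sigma_rv M Z MZ) (Ypot k) \<omega>"
  shows "(\<integral>\<^sup>+ \<omega>. ennreal ((Y (fst \<omega>) - f0 (X (snd \<omega>)) (Z (fst \<omega>)))\<^sup>2) \<partial>(M \<Otimes>\<^sub>M M))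
         - (\<integral>\<^sup>+ \<omega>. ennreal ((Y \<omega> - f0 (X \<omega>) (Z \<omega>))\<^sup>2) \<partial>M)
       = (\<Sum>k\<in>{1..K}. \<Sum>j\<in>{1..K} - {k}.
            ennreal (measure M {\<omega>\<in>space M. X \<omega> = k} * measure M {\<omega>\<in>space M. X \<omega> = j}) *
            (\<integral>\<^sup>+ z. ennreal ((m k z - m j z)\<^sup>2)
               \<partial>(distr (uniform_measure M {\<omega>\<in>space M. X \<omega> = k}) MZ Z)))"
proof -
  have "gvim M MZ K Y X Z Ypot f0 m"
    unfolding gvim_def gvim_axioms_def using assms by blast
  then show ?thesis by (rule gvim.main)
qed

end
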